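(* Let $X$ be a topological space in which every point has a fundamental system of compact neighbourhoods, and let $L\subset X$ be a compact subspace which is separated in $X$. Then $L$ admits an open neighbourhood in $X$ which is Hausdorff.
   Context: Compact means quasi-compact and Hausdorff (Bourbaki's convention). A subset $A\subset X$ is separated in $X$ if any two distinct points of $A$ admit disjoint open neighbourhoods in $X$. *)

theory Defs
  imports "HOL-Analysis.Analysis"
begin

definition bourbaki_compactin :: "'a topology \<Rightarrow> 'a set \<Rightarrow> bool" where
  "bourbaki_compactin X K \<longleftrightarrow> compactin X K \<and> Hausdorff_space (subtopology X K)"

definition separated_in :: "'a topology \<Rightarrow> 'a set \<Rightarrow> bool" where
  "separated_in X A \<longleftrightarrow> A \<subseteq> topspace X \<and>
     (\<forall>x\<in>A. \<forall>y\<in>A. x \<noteq> y \<longrightarrow>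
        (\<exists>U V. openin X U \<and> openin X V \<and> x \<in> U \<and> y \<in> V \<and> disjnt U V))"

definition has_compact_nbhd_basis :: "'a topology \<Rightarrow> bool" where
  "has_compact_nbhd_basis X \<longleftrightarrow>
     (\<forall>x U. openin X U \<and> x \<in> U \<longrightarrow>
        (\<exists>K V. openin X V \<and> x \<in> V \<and> V \<subseteq> K \<and> K \<subseteq> U \<and> bourbaki_compactin X K))"

end

theory Submission
  imports Defs
begin

definition sepp :: "'a topology \<Rightarrow> 'a \<Rightarrow> 'a \<Rightarrow> bool" where
  "sepp X a b \<longleftrightarrow> a = b \<or> (\<exists>U V. openin X U \<and> openin X V \<and> a \<in> U \<and> b \<in> V \<and> disjnt U V)"

lemma cover_fin:
  assumes "compactin X L" "\<And>y. y \<in> L \<Longrightarrow> openin X (B y) \<and> y \<in> B y"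
  shows "\<exists>F. finite F \<and> F \<subseteq> L \<and> L \<subseteq> \<Union>(B ` F)"
proof -
  have "(\<forall>U\<in>B ` L. openin X U) \<and> L \<subseteq> \<Union>(B ` L)" using assms(2) by blast
  then obtain G where G: "finite G" "G \<subseteq> B ` L" "L \<subseteq> \<Union>G"
    using assms(1) unfolding compactin_def by meson
  then obtain F where "F \<subseteq> L" "finite F" "G = B ` F" using finite_subset_image[OF G(1,2)] by blast
  then show ?thesis using G(3) by blast
qed

lemma step:
  assumes "compactin X L"
    and loc: "\<And>y. y \<in> L \<Longrightarrow> \<exists>A B. openin X A \<and> openin X B \<and> P A \<and> y \<in> B \<and> (\<forall>a\<in>A. \<forall>b\<in>B. R a b)"
    and Pint: "\<And>A A'. P A \<Longrightarrow> P A' \<Longrightarrow> P (A \<inter> A')"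
    and Ptop: "P (topspace X)"
  shows "\<exists>A B. openin X A \<and> openin X B \<and> P A \<and> L \<subseteq> B \<and> (\<forall>a\<in>A. \<forall>b\<in>B. R a b)"
proof -
  define Q where "Q = (\<lambda>y AB. openin X (fst AB) \<and> openin X (snd AB) \<and> P (fst AB) \<and> y \<in> snd AB \<and> (\<forall>a\<in>fst AB. \<forall>b\<in>snd AB. R a b))"
  have "\<forall>y\<in>L. \<exists>AB. Q y AB"
  proof
    fix y assume "y \<in> L"
    then obtain A B where "openin X A \<and> openin X B \<and> P A \<and> y \<in> B \<and> (\<forall>a\<in>A. \<forall>b\<in>B. R a b)" using loc by blast
    then have "Q y (A,B)" unfolding Q_def by simp
    then show "\<exists>AB. Q y AB" ..
  qed
  then have "\<exists>g. \<forall>y\<in>L. Q y (g y)" by (rule bchoice)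
  then obtain g where g: "\<forall>y\<in>L. Q y (g y)" ..
  define fA where "fA = (\<lambda>y. fst (g y))"
  define fB where "fB = (\<lambda>y. snd (g y))"
  have fA1: "openin X (fA y)" and fA2: "P (fA y)" and fB1: "openin X (fB y)" and fB2: "y \<in> fB y"
    and fR: "\<And>a b. a \<in> fA y \<Longrightarrow> b \<in> fB y \<Longrightarrow> R a b" if "y \<in> L" for y
    using g that unfolding Q_def fA_def fB_def by simp_all
  have "\<exists>F. finite F \<and> F \<subseteq> L \<and> L \<subseteq> \<Union>(fB ` F)"
    by (rule cover_fin[OF assms(1)]) (simp add: fB1 fB2)
  then obtain F where F: "finite F" "F \<subseteq> L" "L \<subseteq> \<Union>(fB ` F)" by blast
  define A where "A = topspace X \<inter> \<Inter>(fA ` F)"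
  have "openin X A \<and> P A"
    using F(1,2) unfolding A_def
  proof (induction F rule: finite_induct)
    case empty then show ?case using Ptop by simp
  next
    case (insert y F)
    have sub: "fA y \<subseteq> topspace X" using fA1[of y] insert.prems openin_subset by blast
    have e: "topspace X \<inter> \<Inter>(fA ` insert y F) = fA y \<inter> (topspace X \<inter> \<Inter>(fA ` F))"
      using sub by blast
    have o: "openin X (fA y)" "P (fA y)" using fA1[of y] fA2[of y] insert.prems by simp_all
    have "openin X (topspace X \<inter> \<Inter>(fA ` F)) \<and> P (topspace X \<inter> \<Inter>(fA ` F))"
      using insert.IH insert.prems by simp
    then show ?case unfolding e using Pint o openin_Int by blast
  qed
  moreover have "openin X (\<Union>(fB ` F))" using fB1 F(2) by (intro openin_Union) blast
  moreover have "\<forall>a\<in>A. \<forall>b\<in>\<Union>(fB ` F). R a b"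
  proof (intro ballI)
    fix a b assume a: "a \<in> A" and b: "b \<in> \<Union>(fB ` F)"
    then obtain y where y: "y \<in> F" "b \<in> fB y" by blast
    then have "a \<in> fA y" using a unfolding A_def by blast
    then show "R a b" using fR[of y] y F(2) by blast
  qed
  ultimately show ?thesis using F(3) by blast
qed

theorem proposition6p12:
  fixes X :: "'a topology" and L :: "'a set"
  assumes "has_compact_nbhd_basis X"
    and "bourbaki_compactin X L"
    and "separated_in X L"
  shows "\<exists>W. openin X W \<and> L \<subseteq> W \<and> Hausdorff_space (subtopology X W)"
proof -
  have cL: "compactin X L" using assms(2) unfolding bourbaki_compactin_def by (elim conjE)
  have LX: "L \<subseteq> topspace X" using assms(3) unfolding separated_in_def by (elim conjE)
  have loc: "\<exists>A B. openin X A \<and> openin X B \<and> x \<in> A \<and> y \<in> B \<and> (\<forall>a\<in>A. \<forall>b\<in>B. sepp X a b)"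
    if x: "x \<in> L" and y: "y \<in> L" for x y
  proof (cases "x = y")
    case True
    have "x \<in> topspace X" using x LX by blast
    moreover have "\<forall>x U. openin X U \<and> x \<in> U \<longrightarrow>
        (\<exists>K V. openin X V \<and> x \<in> V \<and> V \<subseteq> K \<and> K \<subseteq> U \<and> bourbaki_compactin X K)"
      using assms(1) unfolding has_compact_nbhd_basis_def .
    ultimately have "\<exists>K V. openin X V \<and> x \<in> V \<and> V \<subseteq> K \<and> K \<subseteq> topspace X \<and> bourbaki_compactin X K"
      by simp
    then obtain K V where KV: "openin X V" "x \<in> V" "V \<subseteq> K" "bourbaki_compactin X K"
      by blast
    have H: "Hausdorff_space (subtopology X K)" using KV(4) unfolding bourbaki_compactin_def by (elim conjE)
    have HH: "\<And>p q. p \<in> topspace (subtopology X K) \<Longrightarrow> q \<in> topspace (subtopology X K) \<Longrightarrow> p \<noteq> q \<Longrightarrow>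
        \<exists>U V. openin (subtopology X K) U \<and> openin (subtopology X K) V \<and> p \<in> U \<and> q \<in> V \<and> disjnt U V"
      using H unfolding Hausdorff_space_def by simp
    have "sepp X a b" if a: "a \<in> V" and b: "b \<in> V" for a b
    proof (cases "a = b")
      case False
      have "a \<in> topspace X" "b \<in> topspace X" using a b KV(1) openin_subset by blast+
      then have "a \<in> topspace (subtopology X K)" "b \<in> topspace (subtopology X K)"
        using a b KV(3) by auto
      then obtain U1 U2 where U: "openin (subtopology X K) U1" "openin (subtopology X K) U2"
        "a \<in> U1" "b \<in> U2" "disjnt U1 U2"
        using HH False by blast
      obtain T1 where T1: "openin X T1" "U1 = T1 \<inter> K" using U(1) unfolding openin_subtopology by blast
      obtain T2 where T2: "openin X T2" "U2 = T2 \<inter> K" using U(2) unfolding openin_subtopology by blast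
      have o1: "openin X (T1 \<inter> V)" using T1(1) KV(1) by (rule openin_Int)
      have o2: "openin X (T2 \<inter> V)" using T2(1) KV(1) by (rule openin_Int)
      have dj: "disjnt (T1 \<inter> V) (T2 \<inter> V)"
        using U(5) T1(2) T2(2) KV(3) unfolding disjnt_def by blast
      have "a \<in> T1 \<inter> V" "b \<in> T2 \<inter> V" using U(3,4) T1(2) T2(2) a b by blast+
      then show ?thesis unfolding sepp_def using o1 o2 dj by blast
    qed (simp add: sepp_def)
    then show ?thesis using KV(1,2) True by blast
  next
    case False
    have "\<exists>U V. openin X U \<and> openin X V \<and> x \<in> U \<and> y \<in> V \<and> disjnt U V"
    proof -
      have S: "\<forall>x\<in>L. \<forall>y\<in>L. x \<noteq> y \<longrightarrow> (\<exists>U V. openin X U \<and> openin X V \<and> x \<in> U \<and> y \<in> V \<and> disjnt U V)"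
        using assms(3) unfolding separated_in_def by (elim conjE)
      show ?thesis using S[rule_format, OF x y False] .
    qed
    then obtain U V where UV: "openin X U" "openin X V" "x \<in> U" "y \<in> V" "disjnt U V"
      by blast
    have "sepp X a b" if "a \<in> U" "b \<in> V" for a b
      unfolding sepp_def using UV that by blast
    then show ?thesis using UV by blast
  qed
  have per: "\<exists>A B. openin X A \<and> openin X B \<and> x \<in> A \<and> L \<subseteq> B \<and> (\<forall>a\<in>A. \<forall>b\<in>B. sepp X a b)"
    if x: "x \<in> L" for x
  proof (rule step[OF cL, where P="\<lambda>A. x \<in> A" and R="sepp X"])
    show "\<And>y. y \<in> L \<Longrightarrow> \<exists>A B. openin X A \<and> openin X B \<and> x \<in> A \<and> y \<in> B \<and> (\<forall>a\<in>A. \<forall>b\<in>B. sepp X a b)"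
      using loc[OF x] by simp
  qed (use x LX in auto)
  have "\<exists>A B. openin X A \<and> openin X B \<and> L \<subseteq> A \<and> L \<subseteq> B \<and> (\<forall>a\<in>A. \<forall>b\<in>B. sepp X b a)"
  proof (rule step[OF cL, where P="\<lambda>B'. L \<subseteq> B'" and R="\<lambda>a b. sepp X b a"])
    fix y assume y: "y \<in> L"
    obtain A B where "openin X A" "openin X B" "y \<in> A" "L \<subseteq> B" "\<forall>a\<in>A. \<forall>b\<in>B. sepp X a b"
      using per[OF y] by blast
    then show "\<exists>A B. openin X A \<and> openin X B \<and> L \<subseteq> A \<and> y \<in> B \<and> (\<forall>a\<in>A. \<forall>b\<in>B. sepp X b a)"
      by blast
  qed (use LX in auto)
  then obtain A B where AB0: "openin X A \<and> openin X B \<and> L \<subseteq> A \<and> L \<subseteq> B \<and> (\<forall>a\<in>A. \<forall>b\<in>B. sepp X b a)"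
    by (elim exE)
  note AB = AB0[THEN conjunct1] AB0[THEN conjunct2, THEN conjunct1] AB0[THEN conjunct2, THEN conjunct2, THEN conjunct2, THEN conjunct1]
     AB0[THEN conjunct2, THEN conjunct2, THEN conjunct1] AB0[THEN conjunct2, THEN conjunct2, THEN conjunct2, THEN conjunct2]
  define W where "W = A \<inter> B"
  have "Hausdorff_space (subtopology X W)"
    unfolding Hausdorff_space_def
  proof (intro allI impI)
    fix u v assume uv: "u \<in> topspace (subtopology X W) \<and> v \<in> topspace (subtopology X W) \<and> u \<noteq> v"
    then have uW: "u \<in> W" and vW: "v \<in> W" and ne: "u \<noteq> v" by simp_all
    then have "u \<in> B" "v \<in> A" unfolding W_def by simp_all
    then have "sepp X u v" using AB(5) by blast
    then obtain T1 T2 where T: "openin X T1" "openin X T2" "u \<in> T1" "v \<in> T2" "disjnt T1 T2"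
      using ne unfolding sepp_def by blast
    have o1: "openin (subtopology X W) (T1 \<inter> W)" using T(1) openin_subtopology by blast
    have o2: "openin (subtopology X W) (T2 \<inter> W)" using T(2) openin_subtopology by blast
    have dj: "disjnt (T1 \<inter> W) (T2 \<inter> W)" using T(5) by (simp add: disjnt_def inf_assoc inf_left_commute) blast
    show "\<exists>U V. openin (subtopology X W) U \<and> openin (subtopology X W) V \<and> u \<in> U \<and> v \<in> V \<and> disjnt U V"
      using o1 o2 dj T(3,4) uW vW by blast
  qed
  then show ?thesis using AB W_def by blast
qed

end
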